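(* Let $\gamma\in[0,1]$ and let $(\gamma_n)$ be a $[0,1]$-valued sequence with $|\gamma_n-\gamma|=O(1/n)$. Then for every $u\in(0,1)$, $\lim_{n\to\infty}\phi_{n,\gamma_n}(u)=\tfrac12\mathbf 1_{\{\gamma\}}(u)+\mathbf 1_{(\gamma,1]}(u)$, and $\lim_{n\to\infty}\phi_{n,\gamma_n}'(u)$ equals $0$ if $u\ne\gamma$ and $+\infty$ if $u=\gamma$.
   Context: $[x]$ is the integer part. $\phi_{n,\alpha}(t)=\sum_{j=1+[(n-1)\alpha]}^n\binom{n}{j}t^j(1-t)^{n-j}$, $t\in[0,1]$. $\mathbf 1_A$ is the indicator of $A$. *)

theory Defs
  imports "HOL-Analysis.Analysis" "HOL-Library.Landau_Symbols"
begin

definition phi :: "nat \<Rightarrow> real \<Rightarrow> real \<Rightarrow> real" where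
  "phi n \<alpha> t = (\<Sum>j = nat (1 + \<lfloor>(real n - 1) * \<alpha>\<rfloor>)..n.
      real (n choose j) * t ^ j * (1 - t) ^ (n - j))"

end

theory Submission
  imports Defs "HOL-Probability.Probability"
begin


lemma PiM_bern_prob: "prob_space (PiM (UNIV::nat set) (\<lambda>_. measure_pmf (bernoulli_pmf p)))"
  by (intro prob_space_PiM measure_pmf.prob_space_axioms)

lemma bin_distr_sum:
  assumes p: "0 \<le> p" "p \<le> 1"
  shows "distr (PiM (UNIV::nat set) (\<lambda>_. measure_pmf (bernoulli_pmf p))) borel
           (\<lambda>\<omega>. \<Sum>i<n. if \<omega> i then 1 else (0::real))
       = distr (measure_pmf (binomial_pmf n p)) borel real"
proof -
  define B where "B = measure_pmf (bernoulli_pmf p)"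
  define M where "M = PiM (UNIV::nat set) (\<lambda>_. B)"
  interpret P: product_prob_space "\<lambda>_::nat. B" UNIV
    unfolding B_def by (intro product_prob_spaceI measure_pmf.prob_space_axioms)
  define r where "r = (\<lambda>f::nat\<Rightarrow>bool. \<Sum>i<n. if f i then 1 else (0::real))"
  have rm: "r \<in> borel_measurable (PiM {..<n} (\<lambda>_. B))"
    unfolding r_def B_def by measurable
  have "distr M borel r = distr M borel (\<lambda>\<omega>. r (restrict \<omega> {..<n}))"
    by (intro distr_cong) (auto simp: r_def)
  also have "\<dots> = distr (distr M (PiM {..<n} (\<lambda>_. B)) (\<lambda>\<omega>. restrict \<omega> {..<n})) borel r"
    by (subst distr_distr) (auto simp: M_def o_def intro: rm)
  also have "distr M (PiM {..<n} (\<lambda>_. B)) (\<lambda>\<omega>. restrict \<omega> {..<n}) = PiM {..<n} (\<lambda>_. B)"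
    unfolding M_def by (rule P.distr_PiM_restrict_finite) auto
  also have "PiM {..<n} (\<lambda>_. B) = distr (measure_pmf (Pi_pmf {..<n} False (\<lambda>_. bernoulli_pmf p)))
      (PiM {..<n} (\<lambda>_. count_space UNIV)) (\<lambda>x. restrict x {..<n})" (is "_ = ?D")
  proof (cases "n = 0")
    case True
    have "?D = distr (measure_pmf (return_pmf (\<lambda>_::nat. False))) (count_space {\<lambda>_. undefined}) (\<lambda>x. restrict x {})"
      using True by (intro distr_cong) (auto simp: PiM_empty)
    also have "\<dots> = count_space {\<lambda>_. undefined}"
      by (intro measure_eqI) (auto simp: subset_singleton_iff emeasure_distr restrict_def measure_pmf.emeasure_space_1[simplified])
    finally show ?thesis using True by (simp add: PiM_empty)
  next
    case False
    have "prob_space.indep_vars (measure_pmf (Pi_pmf {..<n} False (\<lambda>_. bernoulli_pmf p)))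
             (\<lambda>_. count_space UNIV) (\<lambda>x f. f x) {..<n}"
      by (rule indep_vars_Pi_pmf) auto
    then have "?D = PiM {..<n} (\<lambda>i. distr (measure_pmf (Pi_pmf {..<n} False (\<lambda>_. bernoulli_pmf p))) (count_space UNIV) (\<lambda>f. f i))"
      using False by (subst (asm) prob_space.indep_vars_iff_distr_eq_PiM'[OF measure_pmf.prob_space_axioms]) auto
    also have "\<dots> = PiM {..<n} (\<lambda>_. B)"
      by (intro PiM_cong refl) (auto simp: B_def map_pmf_rep_eq[symmetric] Pi_pmf_component)
    finally show ?thesis by simp
  qed
  also have "distr ?D borel r = distr (measure_pmf (Pi_pmf {..<n} False (\<lambda>_. bernoulli_pmf p))) borel
        (\<lambda>x. r (restrict x {..<n}))"
  proof (subst distr_distr)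
    show "r \<in> borel_measurable (PiM {..<n} (\<lambda>_. count_space UNIV))"
      unfolding r_def by measurable
  qed (auto simp: o_def space_PiM)
  also have "\<dots> = distr (measure_pmf (Pi_pmf {..<n} False (\<lambda>_. bernoulli_pmf p))) borel
        (\<lambda>f. real (card {i\<in>{..<n}. f i}))"
  proof (intro distr_cong refl)
    fix f :: "nat \<Rightarrow> bool"
    have "(\<Sum>i<n. if f i then 1 else (0::real)) = (\<Sum>i\<in>{i\<in>{..<n}. f i}. 1)"
      by (intro sum.mono_neutral_cong_right) auto
    then show "r (restrict f {..<n}) = real (card {i\<in>{..<n}. f i})"
      by (simp add: r_def)
  qed
  also have "\<dots> = distr (measure_pmf (map_pmf (\<lambda>f. card {i\<in>{..<n}. f i}) (Pi_pmf {..<n} False (\<lambda>_. bernoulli_pmf p)))) borel real"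
    by (simp add: map_pmf_rep_eq distr_distr o_def)
  also have "map_pmf (\<lambda>f. card {i\<in>{..<n}. f i}) (Pi_pmf {..<n} False (\<lambda>_. bernoulli_pmf p)) = binomial_pmf n p"
    by (rule binomial_pmf_altdef'[symmetric]) (use p in auto)
  finally show ?thesis by (simp add: M_def B_def r_def)
qed

lemma binomial_clt:
  fixes p :: real
  assumes p: "0 < p" "p < 1"
  shows "weak_conv_m (\<lambda>m. distr (measure_pmf (binomial_pmf m p)) borel
            (\<lambda>k. (real k - real m*p) / sqrt (real m * (p*(1-p))))) std_normal_distribution"
proof -
  define B where "B = measure_pmf (bernoulli_pmf p)"
  define M where "M = PiM (UNIV::nat set) (\<lambda>_. B)"
  interpret prob_space M unfolding M_def B_def by (rule PiM_bern_prob)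
  define X where "X = (\<lambda>(i::nat) (\<omega>::nat\<Rightarrow>bool). if \<omega> i then 1 else (0::real))"
  define f where "f = (\<lambda>b::bool. if b then 1 else (0::real))"
  define \<mu> where "\<mu> = distr B borel f"
  define \<sigma> where "\<sigma> = sqrt (p*(1-p))"
  have cm: "(\<lambda>\<omega>. \<omega> i) \<in> measurable M B" for i
    unfolding M_def by (rule measurable_component_singleton) auto
  have fm: "f \<in> borel_measurable B" unfolding B_def by simp
  have comp: "distr M B (\<lambda>\<omega>. \<omega> i) = B" for i
    unfolding M_def by (rule distr_PiM_component) (auto simp: B_def measure_pmf.prob_space_axioms)
  have Xd: "distr M borel (X i) = \<mu>" for i
  proof -
    have "distr M borel (X i) = distr (distr M B (\<lambda>\<omega>. \<omega> i)) borel f"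
      by (subst distr_distr[OF fm cm]) (auto simp: X_def f_def o_def)
    then show ?thesis by (simp add: comp \<mu>_def)
  qed
  have indep0: "indep_vars (\<lambda>_. B) (\<lambda>i \<omega>. \<omega> i) UNIV"
  proof (subst indep_vars_iff_distr_eq_PiM)
    show "distr M (PiM UNIV (\<lambda>i. B)) (\<lambda>x. \<lambda>i\<in>UNIV. x i) = PiM UNIV (\<lambda>i. distr M B (\<lambda>\<omega>. \<omega> i))"
      using comp by (simp add: restrict_UNIV) (simp add: M_def)
  qed (auto intro: cm)
  have indep: "indep_vars (\<lambda>_. borel) X UNIV"
    using indep_vars_compose2[OF indep0, of "\<lambda>_. f" "\<lambda>_. borel"] fm
    by (simp add: X_def f_def)
  have intE: "integral\<^sup>L M (\<lambda>\<omega>. g (\<omega> i)) = g True * p + g False * (1 - p)" for g :: "bool \<Rightarrow> real" and i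
  proof -
    have "integral\<^sup>L M (\<lambda>\<omega>. g (\<omega> i)) = integral\<^sup>L (distr M B (\<lambda>\<omega>. \<omega> i)) g"
      by (subst integral_distr[OF cm]) (auto simp: B_def)
    also have "\<dots> = integral\<^sup>L B g" by (simp only: comp)
    finally show ?thesis using p by (simp add: B_def)
  qed
  have intI: "integrable M (\<lambda>\<omega>. g (\<omega> i))" for g :: "bool \<Rightarrow> real" and i
  proof -
    have "integrable (distr M B (\<lambda>\<omega>. \<omega> i)) g"
      unfolding comp unfolding B_def by (rule integrable_measure_pmf_finite) simp
    then show ?thesis
      by (subst (asm) integrable_distr_eq[OF cm]) (auto simp: B_def)
  qed
  have EX: "expectation (X n) = p" for n
    using intE[of "f" n] by (simp add: X_def f_def)
  have "weak_conv_m (\<lambda>n. distr M borel (\<lambda>x. (\<Sum>i<n. X i x - p) / sqrt (real n*\<sigma>\<^sup>2))) std_normal_distribution"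
  proof (rule central_limit_theorem[OF indep EX])
    show "0 < \<sigma>" using p by (simp add: \<sigma>_def)
    show "integrable M (\<lambda>x. (X n x)\<^sup>2)" for n
      using intI[of "\<lambda>b. (f b)\<^sup>2" n] by (simp add: X_def f_def)
    show "variance (X n) = \<sigma>\<^sup>2" for n
      unfolding EX using intE[of "\<lambda>b. (f b - p)\<^sup>2" n] p
      by (simp add: X_def f_def \<sigma>_def power2_eq_square algebra_simps)
    show "distr M borel (X n) = \<mu>" for n by (rule Xd)
  qed
  also have "(\<lambda>n. distr M borel (\<lambda>x. (\<Sum>i<n. X i x - p) / sqrt (real n*\<sigma>\<^sup>2))) =
     (\<lambda>m. distr (measure_pmf (binomial_pmf m p)) borel (\<lambda>k. (real k - real m*p) / sqrt (real m * (p*(1-p)))))"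
  proof
    fix n
    define h where "h = (\<lambda>s. (s - real n*p) / sqrt (real n*\<sigma>\<^sup>2))"
    have hm: "h \<in> borel_measurable borel" unfolding h_def by measurable
    have "distr M borel (\<lambda>x. (\<Sum>i<n. X i x - p) / sqrt (real n*\<sigma>\<^sup>2)) = distr M borel (\<lambda>x. h (\<Sum>i<n. X i x))"
      by (intro distr_cong) (auto simp: h_def sum_subtractf)
    also have "\<dots> = distr (distr M borel (\<lambda>x. \<Sum>i<n. X i x)) borel h"
      by (subst distr_distr[OF hm]) (auto simp: X_def M_def B_def o_def)
    also have "distr M borel (\<lambda>x. \<Sum>i<n. X i x) = distr (measure_pmf (binomial_pmf n p)) borel real"
      unfolding M_def B_def X_def by (rule bin_distr_sum) (use p in auto)
    also have "distr \<dots> borel h = distr (measure_pmf (binomial_pmf n p)) borel (\<lambda>k. h (real k))"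
      by (subst distr_distr[OF hm]) (auto simp: o_def)
    finally show "distr M borel (\<lambda>x. (\<Sum>i<n. X i x - p) / sqrt (real n*\<sigma>\<^sup>2)) =
       distr (measure_pmf (binomial_pmf n p)) borel (\<lambda>k. (real k - real n*p) / sqrt (real n * (p*(1-p))))"
      using p by (simp add: h_def \<sigma>_def)
  qed
  finally show ?thesis .
qed


lemma stdN_singleton: "measure std_normal_distribution {x} = 0"
proof -
  have "{x} \<in> null_sets std_normal_distribution"
  proof (subst null_sets_density_iff)
    have "AE z in lborel. z \<in> {x} \<longrightarrow> ennreal (std_normal_density z) = 0"
      using AE_lborel_singleton[of x] by eventually_elim auto
    then show "{x} \<in> sets lborel \<and> (AE z in lborel. z \<in> {x} \<longrightarrow> ennreal (std_normal_density z) = 0)"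
      by auto
  qed auto
  then show ?thesis by (simp add: measure_def null_setsD1)
qed

lemma stdN_isCont: "isCont (cdf std_normal_distribution) x"
  using finite_borel_measure.isCont_cdf[OF real_distribution.finite_borel_measure_M[OF real_dist_normal_dist]] stdN_singleton by simp

lemma stdN_pos:
  assumes "a < b"
  shows "cdf std_normal_distribution a < cdf std_normal_distribution b"
proof -
  interpret N: real_distribution std_normal_distribution by (rule real_dist_normal_dist)
  define c where "c = std_normal_density (\<bar>a\<bar> + \<bar>b\<bar>)"
  have c: "c > 0" unfolding c_def by (simp add: normal_density_pos)
  have le: "c \<le> std_normal_density x" if "x \<in> {a<..b}" for x
  proof -
    have "\<bar>x\<bar> \<le> \<bar>\<bar>a\<bar> + \<bar>b\<bar>\<bar>" using that by auto
    then have "x\<^sup>2 \<le> (\<bar>a\<bar> + \<bar>b\<bar>)\<^sup>2" by (simp only: abs_le_square_iff)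
    then show ?thesis unfolding c_def std_normal_density_def by (intro mult_left_mono) auto
  qed
  have "emeasure std_normal_distribution {a<..b} = (\<integral>\<^sup>+ x. ennreal (std_normal_density x) * indicator {a<..b} x \<partial>lborel)"
    by (subst emeasure_density) auto
  also have "\<dots> \<ge> (\<integral>\<^sup>+ x. ennreal c * indicator {a<..b} x \<partial>lborel)"
    by (intro nn_integral_mono) (auto simp: le indicator_def)
  finally have "emeasure std_normal_distribution {a<..b} \<ge> ennreal c * ennreal (b - a)"
    using assms by (simp add: nn_integral_cmult)
  then have "ennreal (c * (b - a)) \<le> ennreal (measure std_normal_distribution {a<..b})"
    using c assms by (simp add: ennreal_mult[symmetric] N.emeasure_eq_measure)
  then have "c * (b - a) \<le> measure std_normal_distribution {a<..b}"
    by (simp add: ennreal_le_iff)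
  moreover have "c * (b - a) > 0" using c assms by simp
  ultimately have "measure std_normal_distribution {a<..b} > 0" by linarith
  then show ?thesis
    using N.cdf_diff_eq[OF assms] by simp
qed

lemma stdN_half: "cdf std_normal_distribution 0 = 1/2"
proof -
  interpret N: real_distribution std_normal_distribution by (rule real_dist_normal_dist)
  have refl: "(\<integral>\<^sup>+ x. g x \<partial>lborel) = (\<integral>\<^sup>+ x. g (- x) \<partial>lborel)" if [measurable]: "g \<in> borel_measurable borel" for g :: "real \<Rightarrow> ennreal"
  proof -
    have "(\<integral>\<^sup>+ x. g x \<partial>lborel) = (\<integral>\<^sup>+ x. g x \<partial>distr lborel borel uminus)"
      by (simp add: lborel_distr_uminus)
    also have "\<dots> = (\<integral>\<^sup>+ x. g (- x) \<partial>lborel)"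
      by (subst nn_integral_distr) auto
    finally show ?thesis .
  qed
  have "emeasure std_normal_distribution {0..} = (\<integral>\<^sup>+ x. ennreal (std_normal_density x) * indicator {0..} x \<partial>lborel)"
    by (subst emeasure_density) auto
  also have "\<dots> = (\<integral>\<^sup>+ x. ennreal (std_normal_density (-x)) * indicator {0..} (-x) \<partial>lborel)"
    by (rule refl) measurable
  also have "\<dots> = (\<integral>\<^sup>+ x. ennreal (std_normal_density x) * indicator {..0} x \<partial>lborel)"
    by (intro nn_integral_cong) (simp add: std_normal_density_def indicator_def)
  also have "\<dots> = emeasure std_normal_distribution {..0}"
    by (subst emeasure_density) auto
  finally have "measure std_normal_distribution {0..} = measure std_normal_distribution {..0}"
    by (simp add: N.emeasure_eq_measure)
  moreover have "measure std_normal_distribution {0..} = measure std_normal_distribution {0<..} + measure std_normal_distribution {0}"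
  proof -
    have "{0::real..} = {0<..} \<union> {0}" by auto
    then show ?thesis using N.finite_measure_Union[of "{0<..}" "{0::real}"] by simp
  qed
  moreover have "measure std_normal_distribution {..0} + measure std_normal_distribution {0<..} = 1"
  proof -
    have "{..0::real} \<union> {0<..} = UNIV" by auto
    moreover have "{..0::real} \<inter> {0<..} = {}" by auto
    ultimately show ?thesis using N.prob_space N.finite_measure_Union[of "{..0}" "{0::real<..}"] by simp
  qed
  ultimately show ?thesis using stdN_singleton by (simp add: cdf_def)
qed


lemma cdf_shift_conv:
  fixes x :: "nat \<Rightarrow> real" and N :: "real measure"
  assumes wc: "weak_conv_m \<mu> N" and rd: "\<And>n. real_distribution (\<mu> n)"
    and cont: "\<And>y. isCont (cdf N) y" and mono: "\<And>a b. a \<le> b \<Longrightarrow> cdf N a \<le> cdf N b"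
    and lim: "x \<longlonglongrightarrow> x0"
  shows "(\<lambda>n. cdf (\<mu> n) (x n)) \<longlonglongrightarrow> cdf N x0"
proof (rule tendstoI)
  fix \<epsilon> :: real assume e: "\<epsilon> > 0"
  obtain s where s: "s > 0" "\<And>y. y \<noteq> x0 \<and> norm (y - x0) < s \<Longrightarrow> norm (cdf N y - cdf N x0) < \<epsilon>/2"
    using LIM_D[OF isContD[OF cont[of x0]], of "\<epsilon>/2"] e by auto
  define d where "d = s/2"
  have d: "d > 0" "d < s" using s by (auto simp: d_def)
  have up: "cdf N (x0 + d) < cdf N x0 + \<epsilon>/2" and lo: "cdf N (x0 - d) > cdf N x0 - \<epsilon>/2"
  proof -
    have "norm (cdf N (x0 + d) - cdf N x0) < \<epsilon>/2" "norm (cdf N (x0 - d) - cdf N x0) < \<epsilon>/2"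
      using s(2)[of "x0 + d"] s(2)[of "x0 - d"] d by auto
    then show "cdf N (x0 + d) < cdf N x0 + \<epsilon>/2" "cdf N (x0 - d) > cdf N x0 - \<epsilon>/2"
      unfolding real_norm_def abs_less_iff by linarith+
  qed
  have c1: "(\<lambda>n. cdf (\<mu> n) (x0 + d)) \<longlonglongrightarrow> cdf N (x0 + d)"
    using wc cont unfolding weak_conv_m_def weak_conv_def by auto
  have c2: "(\<lambda>n. cdf (\<mu> n) (x0 - d)) \<longlonglongrightarrow> cdf N (x0 - d)"
    using wc cont unfolding weak_conv_m_def weak_conv_def by auto
  have e1: "\<forall>\<^sub>F n in sequentially. dist (cdf (\<mu> n) (x0 + d)) (cdf N (x0 + d)) < \<epsilon>/2"
    using tendstoD[OF c1, of "\<epsilon>/2"] e by simp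
  have e2: "\<forall>\<^sub>F n in sequentially. dist (cdf (\<mu> n) (x0 - d)) (cdf N (x0 - d)) < \<epsilon>/2"
    using tendstoD[OF c2, of "\<epsilon>/2"] e by simp
  have e3: "\<forall>\<^sub>F n in sequentially. dist (x n) x0 < d"
    using tendstoD[OF lim] d by simp
  show "\<forall>\<^sub>F n in sequentially. dist (cdf (\<mu> n) (x n)) (cdf N x0) < \<epsilon>"
    using e1 e2 e3
  proof eventually_elim
    case (elim n)
    interpret real_distribution "\<mu> n" by (rule rd)
    have "x0 - d \<le> x n" "x n \<le> x0 + d" using elim(3) by (auto simp: dist_real_def)
    then have "cdf (\<mu> n) (x0 - d) \<le> cdf (\<mu> n) (x n)" "cdf (\<mu> n) (x n) \<le> cdf (\<mu> n) (x0 + d)"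
      by (auto intro: cdf_nondecreasing)
    then show ?case using elim(1,2) up lo unfolding dist_real_def abs_less_iff by linarith
  qed
qed


lemma bin_cdf_lim:
  fixes p :: real and c :: "nat \<Rightarrow> real"
  assumes p: "0 < p" "p < 1" and lim: "(\<lambda>m. c m / sqrt (real m)) \<longlonglongrightarrow> d"
  shows "(\<lambda>m. measure_pmf.prob (binomial_pmf m p) {k. real k \<le> real m * p + c m})
           \<longlonglongrightarrow> cdf std_normal_distribution (d / sqrt (p*(1-p)))"
proof -
  define \<sigma> where "\<sigma> = sqrt (p*(1-p))"
  have sp: "\<sigma> > 0" using p by (simp add: \<sigma>_def)
  define \<mu> where "\<mu> = (\<lambda>m. distr (measure_pmf (binomial_pmf m p)) borel
            (\<lambda>k. (real k - real m*p) / sqrt (real m * (p*(1-p)))))"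
  define x where "x = (\<lambda>m. c m / sqrt (real m) / \<sigma>)"
  have wc: "weak_conv_m \<mu> std_normal_distribution" unfolding \<mu>_def by (rule binomial_clt[OF p])
  have rd: "real_distribution (\<mu> n)" for n
    unfolding \<mu>_def by (rule prob_space.real_distribution_distr) (auto simp: measure_pmf.prob_space_axioms)
  have xl: "x \<longlonglongrightarrow> d / \<sigma>" unfolding x_def by (intro tendsto_intros lim) (use sp in auto)
  have conv: "(\<lambda>n. cdf (\<mu> n) (x n)) \<longlonglongrightarrow> cdf std_normal_distribution (d / \<sigma>)"
    by (rule cdf_shift_conv[OF wc rd stdN_isCont _ xl])
       (rule finite_borel_measure.cdf_nondecreasing[OF real_distribution.finite_borel_measure_M[OF real_dist_normal_dist]])
  have eq: "cdf (\<mu> m) (x m) = measure_pmf.prob (binomial_pmf m p) {k. real k \<le> real m * p + c m}" if m: "m \<ge> 1" for m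
  proof -
    have sm: "sqrt (real m * (p*(1-p))) = sqrt (real m) * \<sigma>" by (simp add: \<sigma>_def real_sqrt_mult)
    have pos: "sqrt (real m) * \<sigma> > 0" using m sp by simp
    have "cdf (\<mu> m) (x m) = measure (measure_pmf (binomial_pmf m p))
        ((\<lambda>k. (real k - real m*p) / sqrt (real m * (p*(1-p)))) -` {..x m})"
      unfolding cdf_def \<mu>_def by (subst measure_distr) auto
    also have "(\<lambda>k. (real k - real m*p) / sqrt (real m * (p*(1-p)))) -` {..x m} = {k. real k \<le> real m * p + c m}"
    proof -
      have "x m = c m / (sqrt (real m) * \<sigma>)" unfolding x_def by simp
      then show ?thesis using pos unfolding sm by (auto simp: divide_le_cancel)
    qed
    finally show ?thesis .
  qed
  have "(\<lambda>n. cdf (\<mu> n) (x n)) \<longlonglongrightarrow> cdf std_normal_distribution (d / \<sigma>)" by (rule conv)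
  then show ?thesis unfolding \<sigma>_def[symmetric]
  proof (rule Lim_transform_eventually)
    show "\<forall>\<^sub>F m in sequentially. cdf (\<mu> m) (x m) = measure_pmf.prob (binomial_pmf m p) {k. real k \<le> real m * p + c m}"
      using eventually_ge_at_top[of 1] by eventually_elim (rule eq)
  qed
qed


definition Sb :: "nat \<Rightarrow> nat \<Rightarrow> real \<Rightarrow> real" where
  "Sb n k t = (\<Sum>j = k..n. real (n choose j) * t ^ j * (1 - t) ^ (n - j))"

definition Db :: "nat \<Rightarrow> nat \<Rightarrow> real \<Rightarrow> real" where
  "Db n k t = (if 1 \<le> k \<and> k \<le> n then real n * real ((n-1) choose (k-1)) * t^(k-1) * (1-t)^(n-k) else 0)"

lemma Sb_deriv_main:
  assumes "d + k = n" "1 \<le> k"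
  shows "(Sb n k has_real_derivative Db n k t) (at t)"
  using assms
proof (induction d arbitrary: k)
  case 0
  then have "Sb n k = (\<lambda>t. t ^ n)" by (auto simp: Sb_def fun_eq_iff)
  moreover have "Db n k t = real n * t ^ (n - Suc 0)" using 0 by (auto simp: Db_def)
  ultimately show ?case by (simp add: DERIV_pow)
next
  case (Suc d)
  obtain a where a: "k = Suc a" using Suc.prems by (cases k) auto
  obtain b where b: "n - k = Suc b" using Suc.prems by (cases "n - k") auto
  have IH: "(Sb n (Suc k) has_real_derivative Db n (Suc k) t) (at t)"
    using Suc.prems by (intro Suc.IH) auto
  have split: "Sb n k = (\<lambda>t. real (n choose k) * t ^ k * (1 - t) ^ (n - k) + Sb n (Suc k) t)"
    using Suc.prems by (auto simp: Sb_def fun_eq_iff sum.atLeast_Suc_atMost)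
  have T: "((\<lambda>t. real (n choose k) * t ^ Suc a * (1 - t) ^ Suc b) has_real_derivative
      real (n choose k) * (real (Suc a) * t ^ a * (1 - t) ^ Suc b - real (Suc b) * t ^ Suc a * (1 - t) ^ b)) (at t)"
    by (rule derivative_eq_intros refl | simp)+ (simp add: algebra_simps)
  have id1: "real (n choose k) * real (Suc a) = real n * real ((n-1) choose (k-1))"
  proof -
    have "(n choose k) * Suc a = n * ((n-1) choose (k-1))"
      using times_binomial_minus1_eq[of k n] a by (simp add: mult.commute)
    then show ?thesis by (metis of_nat_mult)
  qed
  have id2: "real (n choose k) * real (Suc b) = real n * real ((n-1) choose k)"
  proof -
    have "(n choose k) * Suc b = n * ((n-1) choose k)"
      using binomial_absorb_comp[of n k] b by (simp add: mult.commute)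
    then show ?thesis by (metis of_nat_mult)
  qed
  have "Db n k t = real (n choose k) * (real (Suc a) * t ^ a * (1 - t) ^ Suc b - real (Suc b) * t ^ Suc a * (1 - t) ^ b) + Db n (Suc k) t"
  proof -
    have "Db n k t = real n * real ((n-1) choose (k-1)) * t ^ a * (1-t) ^ Suc b"
      using Suc.prems a b by (simp add: Db_def)
    also have "\<dots> = real (n choose k) * real (Suc a) * t ^ a * (1-t) ^ Suc b"
      by (simp only: id1)
    finally have e1: "Db n k t = real (n choose k) * real (Suc a) * t ^ a * (1-t) ^ Suc b" .
    have "Db n (Suc k) t = real n * real ((n-1) choose k) * t ^ Suc a * (1-t) ^ b"
    proof -
      have "n - Suc k = b" using b by simp
      then show ?thesis using Suc.prems a b by (simp add: Db_def)
    qed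
    also have "\<dots> = real (n choose k) * real (Suc b) * t ^ Suc a * (1-t) ^ b"
      by (simp only: id2)
    finally have e2: "Db n (Suc k) t = real (n choose k) * real (Suc b) * t ^ Suc a * (1-t) ^ b" .
    show ?thesis unfolding e1 e2 by (simp only: right_diff_distrib mult.assoc)
  qed
  then have "Db n k t = real (n choose k) * (real (Suc a) * t ^ a * (1 - t) ^ Suc b - real (Suc b) * t ^ Suc a * (1 - t) ^ b) + Db n (Suc k) t" .
  then show ?case unfolding split using DERIV_add[OF T IH] a b by simp
qed

definition Kk :: "nat \<Rightarrow> real \<Rightarrow> nat" where
  "Kk n \<alpha> = nat (1 + \<lfloor>(real n - 1) * \<alpha>\<rfloor>)"

lemma phi_Sb: "phi n \<alpha> = Sb n (Kk n \<alpha>)"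
  by (simp add: fun_eq_iff phi_def Sb_def Kk_def)

lemma Sb_deriv: "(Sb n k has_real_derivative Db n k t) (at t)"
proof (cases "k = 0")
  case True
  have "Sb n 0 = (\<lambda>_. 1)"
  proof
    fix t :: real
    have "(t + (1 - t)) ^ n = Sb n 0 t"
      unfolding binomial_ring by (simp add: Sb_def atLeast0AtMost)
    then show "Sb n 0 t = 1" by simp
  qed
  then show ?thesis using True by (simp add: Db_def)
next
  case False
  show ?thesis
  proof (cases "k \<le> n")
    case True
    then show ?thesis using False by (intro Sb_deriv_main[of "n - k"]) auto
  next
    case F2: False
    then have "Sb n k = (\<lambda>_. 0)" by (simp add: Sb_def fun_eq_iff)
    then show ?thesis using F2 by (simp add: Db_def)
  qed
qed

lemma deriv_phi: "deriv (phi n \<alpha>) t = Db n (Kk n \<alpha>) t"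
  unfolding phi_Sb by (rule DERIV_imp_deriv[OF Sb_deriv])


lemma set_pmf_binom_sub: "0 \<le> t \<Longrightarrow> t \<le> 1 \<Longrightarrow> set_pmf (binomial_pmf n t) \<subseteq> {..n}"
  by (auto simp: set_pmf_iff binomial_eq_0)

lemma Sb_prob:
  assumes "0 \<le> t" "t \<le> 1"
  shows "Sb n k t = measure_pmf.prob (binomial_pmf n t) {j. k \<le> j}"
proof -
  have "measure_pmf.prob (binomial_pmf n t) {j. k \<le> j} =
        measure_pmf.prob (binomial_pmf n t) ({j. k \<le> j} \<inter> set_pmf (binomial_pmf n t))"
    by (simp add: measure_Int_set_pmf)
  also have "{j. k \<le> j} \<inter> set_pmf (binomial_pmf n t) = {k..n} \<inter> set_pmf (binomial_pmf n t)"
    using set_pmf_binom_sub[OF assms, of n] by auto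
  also have "measure_pmf.prob (binomial_pmf n t) \<dots> = measure_pmf.prob (binomial_pmf n t) {k..n}"
    by (simp add: measure_Int_set_pmf)
  also have "\<dots> = Sb n k t"
    using assms by (simp add: measure_measure_pmf_finite Sb_def)
  finally show ?thesis ..
qed

lemma Db_pmf:
  assumes "0 \<le> t" "t \<le> 1"
  shows "Db n k t = (if 1 \<le> k \<and> k \<le> n then real n * pmf (binomial_pmf (n-1) t) (k-1) else 0)"
  using assms by (auto simp: Db_def)


lemma nat_le_ceil: "real j \<le> x \<Longrightarrow> j \<le> nat \<lceil>x\<rceil>"
  by (metis ceiling_mono ceiling_of_nat nat_int nat_mono)

lemma binom_ratio:
  assumes p: "0 \<le> p" "p \<le> 1" and i: "i < m"
  shows "pmf (binomial_pmf m p) (Suc i) * (real (Suc i) * (1-p)) = pmf (binomial_pmf m p) i * (real (m - i) * p)"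
proof -
  have c: "real (m choose Suc i) * real (Suc i) = real (m choose i) * real (m - i)"
  proof -
    have "(m choose Suc i) * Suc i = (m choose i) * (m - i)"
      using binomial_absorption[of i m] binomial_absorb_comp[of m i] by (simp add: mult.commute)
    then show ?thesis by (metis of_nat_mult)
  qed
  have e: "m - i = Suc (m - Suc i)" using i by simp
  have "pmf (binomial_pmf m p) (Suc i) * (real (Suc i) * (1-p)) =
        (real (m choose Suc i) * real (Suc i)) * (p * p ^ i) * ((1 - p) ^ (m - Suc i) * (1-p))"
    using p by (simp add: algebra_simps)
  also have "\<dots> = (real (m choose i) * real (m - i)) * (p * p ^ i) * (1 - p) ^ (m - i)"
    unfolding c e by simp
  also have "\<dots> = pmf (binomial_pmf m p) i * (real (m - i) * p)"
    using p by (simp add: algebra_simps)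
  finally show ?thesis .
qed

lemma unimodA:
  assumes p: "0 < p" "p < 1" and A: "(real m - real j0) * p \<le> (real j0 + 1) * (1-p)"
    and ij: "j0 \<le> i"
  shows "pmf (binomial_pmf m p) i \<le> pmf (binomial_pmf m p) j0"
  using ij
proof (induction i rule: nat_induct_at_least)
  case base then show ?case by simp
next
  case (Suc i)
  have "pmf (binomial_pmf m p) (Suc i) \<le> pmf (binomial_pmf m p) i"
  proof (cases "i < m")
    case False
    then show ?thesis using p by (simp add: binomial_eq_0)
  next
    case True
    have r: "pmf (binomial_pmf m p) (Suc i) * (real (Suc i) * (1-p)) = pmf (binomial_pmf m p) i * (real (m - i) * p)"
      using binom_ratio[of p i m] p True by simp
    have "real (m - i) * p \<le> (real m - real j0) * p" using True Suc.hyps p by (simp add: of_nat_diff)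
    also have "\<dots> \<le> (real j0 + 1) * (1-p)" by (rule A)
    also have "\<dots> \<le> real (Suc i) * (1 - p)" using Suc.hyps p by (intro mult_right_mono) auto
    finally have "pmf (binomial_pmf m p) (Suc i) * (real (Suc i) * (1-p)) \<le> pmf (binomial_pmf m p) i * (real (Suc i) * (1-p))"
      unfolding r by (intro mult_left_mono) auto
    moreover have "real (Suc i) * (1-p) > 0" using p by simp
    ultimately show ?thesis by (rule mult_right_le_imp_le)
  qed
  then show ?case using Suc.IH by linarith
qed

lemma unimodB:
  assumes p: "0 < p" "p < 1" and B: "(real m - real j0) * p > (real j0 + 1) * (1-p)"
    and ij: "i \<le> j0"
  shows "pmf (binomial_pmf m p) i \<le> pmf (binomial_pmf m p) j0"
  using ij
proof (induction i rule: inc_induct)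
  case base then show ?case by simp
next
  case (step i)
  have jm: "j0 < m"
  proof (rule ccontr)
    assume "\<not> j0 < m"
    then have "(real m - real j0) * p \<le> 0" using p by (simp add: mult_nonpos_nonneg)
    moreover have "(real j0 + 1) * (1-p) \<ge> 0" using p by simp
    ultimately show False using B by linarith
  qed
  have im: "i < m" using step jm by simp
  have r: "pmf (binomial_pmf m p) (Suc i) * (real (Suc i) * (1-p)) = pmf (binomial_pmf m p) i * (real (m - i) * p)"
    using binom_ratio[of p i m] p im by simp
  have "real (Suc i) * (1 - p) \<le> (real j0 + 1) * (1-p)" using step p by (intro mult_right_mono) auto
  also have "\<dots> \<le> (real m - real j0) * p" using B by simp
  also have "\<dots> \<le> real (m - i) * p" using im step p by (simp add: of_nat_diff)
  finally have "pmf (binomial_pmf m p) i * (real (Suc i) * (1-p)) \<le> pmf (binomial_pmf m p) (Suc i) * (real (Suc i) * (1-p))"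
    unfolding r by (intro mult_left_mono) auto
  moreover have "real (Suc i) * (1-p) > 0" using p by simp
  ultimately have "pmf (binomial_pmf m p) i \<le> pmf (binomial_pmf m p) (Suc i)" by (rule mult_right_le_imp_le)
  then show ?case using step.IH by linarith
qed

lemma card_window:
  fixes S :: "nat set"
  assumes "finite S" "\<And>j. j \<in> S \<Longrightarrow> a < real j \<and> real j \<le> a + w" "w \<ge> 0"
  shows "real (card S) \<le> w + 1"
proof (cases "S = {}")
  case True then show ?thesis using assms by simp
next
  case False
  have sub: "S \<subseteq> {Min S..Max S}" using assms(1) by auto
  have "card S \<le> card {Min S..Max S}" by (rule card_mono[OF _ sub]) simp
  also have "\<dots> = Max S + 1 - Min S" by simp
  finally have c: "real (card S) \<le> real (Max S) + 1 - real (Min S)"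
    using Min_le[OF assms(1), of "Max S"] Max_in[OF assms(1) False] by linarith
  have "a < real (Min S)" "real (Max S) \<le> a + w"
    using assms(2)[OF Min_in[OF assms(1) False]] assms(2)[OF Max_in[OF assms(1) False]] by auto
  then show ?thesis using c by linarith
qed

definition Fb :: "nat \<Rightarrow> real \<Rightarrow> real \<Rightarrow> real" where
  "Fb m p x = measure_pmf.prob (binomial_pmf m p) {j. real j \<le> x}"

lemma Fb_diff:
  assumes "y \<le> x"
  shows "Fb m p x - Fb m p y = (\<Sum>j\<in>{j. y < real j \<and> real j \<le> x}. pmf (binomial_pmf m p) j)"
proof -
  have fin: "finite {j::nat. y < real j \<and> real j \<le> x}"
    by (rule finite_subset[of _ "{..nat \<lceil>x\<rceil>}"]) (auto intro: nat_le_ceil)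
  have "{j. real j \<le> x} - {j. real j \<le> y} = {j. y < real j \<and> real j \<le> x}" by auto
  moreover have "measure_pmf.prob (binomial_pmf m p) ({j. real j \<le> x} - {j. real j \<le> y}) =
    Fb m p x - Fb m p y"
    unfolding Fb_def using assms by (subst measure_pmf.finite_measure_Diff) auto
  ultimately show ?thesis using fin by (simp add: measure_measure_pmf_finite)
qed

lemma window_bound:
  assumes p: "0 < p" "p < 1" and w: "w \<ge> 0"
  shows "min (Fb m p (real j0 + w) - Fb m p (real j0)) (Fb m p (real j0) - Fb m p (real j0 - w))
           \<le> (w + 1) * pmf (binomial_pmf m p) j0"
proof (cases "(real m - real j0) * p \<le> (real j0 + 1) * (1-p)")
  case True
  let ?S = "{j. real j0 < real j \<and> real j \<le> real j0 + w}"
  have fin: "finite ?S"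
    by (rule finite_subset[of _ "{..nat \<lceil>real j0 + w\<rceil>}"]) (auto intro: nat_le_ceil)
  have "Fb m p (real j0 + w) - Fb m p (real j0) = (\<Sum>j\<in>?S. pmf (binomial_pmf m p) j)"
    using w by (intro Fb_diff) auto
  also have "\<dots> \<le> real (card ?S) * pmf (binomial_pmf m p) j0"
    by (intro sum_bounded_above unimodA[OF p True]) auto
  also have "\<dots> \<le> (w + 1) * pmf (binomial_pmf m p) j0"
    by (intro mult_right_mono card_window[OF fin] w) auto
  finally show ?thesis by linarith
next
  case False
  let ?S = "{j. real j0 - w < real j \<and> real j \<le> real j0}"
  have fin: "finite ?S"
    by (rule finite_subset[of _ "{..j0}"]) auto
  have "Fb m p (real j0) - Fb m p (real j0 - w) = (\<Sum>j\<in>?S. pmf (binomial_pmf m p) j)"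
    using w by (intro Fb_diff) auto
  also have "\<dots> \<le> real (card ?S) * pmf (binomial_pmf m p) j0"
    using False by (intro sum_bounded_above unimodB[OF p]) auto
  also have "\<dots> \<le> (w + 1) * pmf (binomial_pmf m p) j0"
    by (intro mult_right_mono card_window[OF fin] w) auto
  finally show ?thesis by linarith
qed


lemma hoeff_le:
  assumes "0 \<le> p" "p \<le> 1" "0 < m" "0 \<le> \<epsilon>"
  shows "measure_pmf.prob (binomial_pmf m p) {x. real x / real m \<le> p - \<epsilon>} \<le> exp (-2 * real m * \<epsilon>\<^sup>2)"
  using binomial_distribution.prob_le'[of p m \<epsilon>] assms by (simp add: binomial_distribution_def)

lemma hoeff_ge:
  assumes "0 \<le> p" "p \<le> 1" "0 < m" "0 \<le> \<epsilon>"
  shows "measure_pmf.prob (binomial_pmf m p) {x. p + \<epsilon> \<le> real x / real m} \<le> exp (-2 * real m * \<epsilon>\<^sup>2)"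
  using binomial_distribution.prob_ge'[of p m \<epsilon>] assms by (simp add: binomial_distribution_def)

lemma exp_lim1:
  assumes "e > 0"
  shows "(\<lambda>n. exp (-2 * real n * e)) \<longlonglongrightarrow> 0"
proof -
  have "(\<lambda>n. exp (-2 * e) ^ n) \<longlonglongrightarrow> 0" using assms by (intro LIMSEQ_power_zero) auto
  moreover have "exp (-2 * real n * e) = exp (-2 * e) ^ n" for n
    by (subst exp_of_nat_mult[symmetric]) (simp add: algebra_simps)
  ultimately show ?thesis by simp
qed

lemma exp_lim2:
  assumes "e > 0"
  shows "(\<lambda>n. real n * exp (-2 * (real n - 1) * e)) \<longlonglongrightarrow> 0"
proof -
  have "(\<lambda>n. real n * exp (-2 * e) ^ n) \<longlonglongrightarrow> 0"
    using assms by (intro powser_times_n_limit_0) auto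
  then have "(\<lambda>n. exp (2 * e) * (real n * exp (-2 * e) ^ n)) \<longlonglongrightarrow> exp (2*e) * 0"
    by (intro tendsto_mult tendsto_const)
  moreover have eqn: "real n * exp (-2 * (real n - 1) * e) = exp (2 * e) * (real n * exp (-2 * e) ^ n)" for n
  proof -
    have "exp (-2 * (real n - 1) * e) = exp (2 * e) * exp (real n * (-2 * e))"
      by (simp add: exp_add[symmetric] algebra_simps)
    moreover have "exp (real n * (-2 * e)) = exp (-2 * e) ^ n" by (rule exp_of_nat_mult)
    ultimately show ?thesis by simp
  qed
  ultimately show ?thesis by (simp only: eqn mult_zero_right)
qed

lemma eventually_lin:
  assumes "\<epsilon> > 0"
  shows "\<forall>\<^sub>F n in sequentially. B \<le> (real n - 1) * \<epsilon>"
proof -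
  obtain N :: nat where N: "B / \<epsilon> + 1 \<le> real N" using real_arch_simple by blast
  show ?thesis
  proof (rule eventually_sequentiallyI[of N])
    fix n assume "N \<le> n"
    then have "B / \<epsilon> \<le> real n - 1" using N by linarith
    then show "B \<le> (real n - 1) * \<epsilon>" using assms by (simp add: field_simps)
  qed
qed

lemma prob_split:
  fixes P :: "nat pmf"
  shows "measure_pmf.prob P {j. j < k} + measure_pmf.prob P {j. k \<le> j} = 1"
proof -
  have "measure_pmf.prob P ({j. j < k} \<union> {j. k \<le> j}) = measure_pmf.prob P {j. j < k} + measure_pmf.prob P {j. k \<le> j}"
    by (rule measure_pmf.finite_measure_Union) force+
  moreover have "{j. j < k} \<union> {j. k \<le> j} = (UNIV :: nat set)" by auto
  ultimately show ?thesis by (simp add: measure_pmf.prob_space)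
qed


lemma part_gt:
  fixes k :: "nat \<Rightarrow> nat" and u \<gamma> B :: real
  assumes u: "0 < u" "u < 1" "\<gamma> < u" "0 \<le> \<gamma>"
    and kb: "\<forall>\<^sub>F n in sequentially. \<bar>real (k n) - real n * \<gamma>\<bar> \<le> B"
    and k1: "\<And>n. n \<ge> 1 \<Longrightarrow> 1 \<le> k n \<and> k n \<le> n"
  shows "(\<lambda>n. Sb n (k n) u) \<longlonglongrightarrow> 1" and "(\<lambda>n. Db n (k n) u) \<longlonglongrightarrow> 0"
proof -
  define \<epsilon> where "\<epsilon> = (u - \<gamma>)/2"
  have e: "\<epsilon> > 0" using u by (simp add: \<epsilon>_def)
  have ue: "u - \<epsilon> = \<gamma> + \<epsilon>" by (simp add: \<epsilon>_def field_simps)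
  have ev: "\<forall>\<^sub>F n in sequentially. \<bar>real (k n) - real n * \<gamma>\<bar> \<le> B \<and> B + 1 \<le> (real n - 1) * \<epsilon> \<and> n \<ge> 2"
    using kb eventually_lin[OF e, of "B+1"] eventually_ge_at_top[of 2] by eventually_elim auto
  have P: "(\<lambda>n. measure_pmf.prob (binomial_pmf n u) {j. j < k n}) \<longlonglongrightarrow> 0"
  proof (rule tendsto_sandwich[OF _ _ tendsto_const exp_lim1[of "\<epsilon>\<^sup>2"]])
    show "\<forall>\<^sub>F n in sequentially. 0 \<le> measure_pmf.prob (binomial_pmf n u) {j. j < k n}" by simp
    show "\<forall>\<^sub>F n in sequentially. measure_pmf.prob (binomial_pmf n u) {j. j < k n} \<le> exp (-2 * real n * \<epsilon>\<^sup>2)"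
      using ev
    proof eventually_elim
      case (elim n)
      have n: "real n \<ge> 2" using elim by simp
      have sub: "{j. j < k n} \<subseteq> {x. real x / real n \<le> u - \<epsilon>}"
      proof safe
        fix j assume "j < k n"
        then have "real j \<le> real (k n) - 1" by linarith
        also have "\<dots> \<le> real n * \<gamma> + B - 1" using elim by linarith
        also have "\<dots> \<le> real n * (u - \<epsilon>)"
          unfolding ue using elim e by (simp add: algebra_simps)
        finally show "real j / real n \<le> u - \<epsilon>" using n by (simp add: divide_le_eq mult.commute)
      qed
      have "measure_pmf.prob (binomial_pmf n u) {j. j < k n} \<le> measure_pmf.prob (binomial_pmf n u) {x. real x / real n \<le> u - \<epsilon>}"
        by (rule measure_pmf.finite_measure_mono[OF sub]) simp
      also have "\<dots> \<le> exp (-2 * real n * \<epsilon>\<^sup>2)" by (rule hoeff_le) (use u e elim in auto)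
      finally show ?case .
    qed
  qed (use e in simp)
  have "Sb n (k n) u = 1 - measure_pmf.prob (binomial_pmf n u) {j. j < k n}" for n
    using Sb_prob[of u n "k n"] prob_split[of "binomial_pmf n u" "k n"] u by simp
  then show "(\<lambda>n. Sb n (k n) u) \<longlonglongrightarrow> 1"
    using tendsto_diff[OF tendsto_const P, of 1] by simp
  show "(\<lambda>n. Db n (k n) u) \<longlonglongrightarrow> 0"
  proof (rule tendsto_sandwich[OF _ _ tendsto_const exp_lim2[of "\<epsilon>\<^sup>2"]])
    show "\<forall>\<^sub>F n in sequentially. 0 \<le> Db n (k n) u" using u by (simp add: Db_def)
    show "\<forall>\<^sub>F n in sequentially. Db n (k n) u \<le> real n * exp (-2 * (real n - 1) * \<epsilon>\<^sup>2)"
      using ev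
    proof eventually_elim
      case (elim n)
      have n1: "1 \<le> n" using elim by simp
      have kk: "1 \<le> k n" "k n \<le> n" using k1[OF n1] by auto
      have m: "real (n - 1) = real n - 1" "0 < n - 1" using elim by auto
      have mem: "k n - 1 \<in> {x. real x / real (n - 1) \<le> u - \<epsilon>}"
      proof -
        have "real (k n - 1) = real (k n) - 1" using kk by simp
        also have "\<dots> \<le> real n * \<gamma> + B - 1" using elim by linarith
        also have "\<dots> \<le> (real n - 1) * (u - \<epsilon>)"
          unfolding ue using elim e u by (simp add: algebra_simps)
        finally show ?thesis using m by (simp add: divide_le_eq mult.commute)
      qed
      have "Db n (k n) u = real n * pmf (binomial_pmf (n-1) u) (k n - 1)"
        using kk u by (simp add: Db_def)
      also have "pmf (binomial_pmf (n-1) u) (k n - 1) \<le> measure_pmf.prob (binomial_pmf (n-1) u) {x. real x / real (n - 1) \<le> u - \<epsilon>}"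
        using mem by (subst measure_pmf_single[symmetric]) (rule measure_pmf.finite_measure_mono, auto)
      also have "\<dots> \<le> exp (-2 * real (n - 1) * \<epsilon>\<^sup>2)" by (rule hoeff_le) (use u e m in auto)
      finally show ?case using m by (simp add: mult_left_mono)
    qed
  qed (use e in simp)
qed


lemma part_lt:
  fixes k :: "nat \<Rightarrow> nat" and u \<gamma> B :: real
  assumes u: "0 < u" "u < \<gamma>" "\<gamma> \<le> 1"
    and kb: "\<forall>\<^sub>F n in sequentially. \<bar>real (k n) - real n * \<gamma>\<bar> \<le> B"
    and k1: "\<And>n. n \<ge> 1 \<Longrightarrow> 1 \<le> k n \<and> k n \<le> n"
  shows "(\<lambda>n. Sb n (k n) u) \<longlonglongrightarrow> 0" and "(\<lambda>n. Db n (k n) u) \<longlonglongrightarrow> 0"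
proof -
  define \<epsilon> where "\<epsilon> = (\<gamma> - u)/2"
  have e: "\<epsilon> > 0" using u by (simp add: \<epsilon>_def)
  have ue: "u + \<epsilon> = \<gamma> - \<epsilon>" by (simp add: \<epsilon>_def field_simps)
  have ev: "\<forall>\<^sub>F n in sequentially. \<bar>real (k n) - real n * \<gamma>\<bar> \<le> B \<and> B + 1 \<le> (real n - 1) * \<epsilon> \<and> n \<ge> 2"
    using kb eventually_lin[OF e, of "B+1"] eventually_ge_at_top[of 2] by eventually_elim auto
  show "(\<lambda>n. Sb n (k n) u) \<longlonglongrightarrow> 0"
  proof (rule tendsto_sandwich[OF _ _ tendsto_const exp_lim1[of "\<epsilon>\<^sup>2"]])
    show "\<forall>\<^sub>F n in sequentially. 0 \<le> Sb n (k n) u" using u by (simp add: Sb_prob)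
    show "\<forall>\<^sub>F n in sequentially. Sb n (k n) u \<le> exp (-2 * real n * \<epsilon>\<^sup>2)"
      using ev
    proof eventually_elim
      case (elim n)
      have n: "real n \<ge> 2" using elim by simp
      have sub: "{j. k n \<le> j} \<subseteq> {x. u + \<epsilon> \<le> real x / real n}"
      proof safe
        fix j assume "k n \<le> j"
        then have "real (k n) \<le> real j" by simp
        moreover have "real n * \<gamma> - B \<le> real (k n)" using elim by linarith
        moreover have "real n * (u + \<epsilon>) \<le> real n * \<gamma> - B"
          unfolding ue using elim e by (simp add: algebra_simps)
        ultimately have "real n * (u + \<epsilon>) \<le> real j" by linarith
        then show "u + \<epsilon> \<le> real j / real n" using n by (simp add: le_divide_eq mult.commute)
      qed
      have "Sb n (k n) u = measure_pmf.prob (binomial_pmf n u) {j. k n \<le> j}"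
        using u by (simp add: Sb_prob)
      also have "\<dots> \<le> measure_pmf.prob (binomial_pmf n u) {x. u + \<epsilon> \<le> real x / real n}"
        by (rule measure_pmf.finite_measure_mono[OF sub]) simp
      also have "\<dots> \<le> exp (-2 * real n * \<epsilon>\<^sup>2)" by (rule hoeff_ge) (use u e elim in auto)
      finally show ?case .
    qed
  qed (use e in simp)
  show "(\<lambda>n. Db n (k n) u) \<longlonglongrightarrow> 0"
  proof (rule tendsto_sandwich[OF _ _ tendsto_const exp_lim2[of "\<epsilon>\<^sup>2"]])
    show "\<forall>\<^sub>F n in sequentially. 0 \<le> Db n (k n) u" using u by (simp add: Db_def)
    show "\<forall>\<^sub>F n in sequentially. Db n (k n) u \<le> real n * exp (-2 * (real n - 1) * \<epsilon>\<^sup>2)"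
      using ev
    proof eventually_elim
      case (elim n)
      have n1: "1 \<le> n" using elim by simp
      have kk: "1 \<le> k n" "k n \<le> n" using k1[OF n1] by auto
      have m: "real (n - 1) = real n - 1" "0 < n - 1" using elim by auto
      have mem: "k n - 1 \<in> {x. u + \<epsilon> \<le> real x / real (n - 1)}"
      proof -
        have "(real n - 1) * (u + \<epsilon>) \<le> real n * \<gamma> - B - 1"
          unfolding ue using elim e u by (simp add: algebra_simps)
        also have "\<dots> \<le> real (k n) - 1" using elim by linarith
        also have "\<dots> = real (k n - 1)" using kk by simp
        finally show ?thesis using m by (simp add: le_divide_eq mult.commute)
      qed
      have "Db n (k n) u = real n * pmf (binomial_pmf (n-1) u) (k n - 1)"
        using kk u by (simp add: Db_def)
      also have "pmf (binomial_pmf (n-1) u) (k n - 1) \<le> measure_pmf.prob (binomial_pmf (n-1) u) {x. u + \<epsilon> \<le> real x / real (n - 1)}"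
        using mem by (subst measure_pmf_single[symmetric]) (rule measure_pmf.finite_measure_mono, auto)
      also have "\<dots> \<le> exp (-2 * real (n - 1) * \<epsilon>\<^sup>2)" by (rule hoeff_ge) (use u e m in auto)
      finally show ?case using m by (simp add: mult_left_mono)
    qed
  qed (use e in simp)
qed


lemma sqrt_seq_top: "filterlim (\<lambda>m. sqrt (real m)) at_top sequentially"
  by (rule filterlim_compose[OF sqrt_at_top filterlim_real_sequentially])

lemma const_over_sqrt: "(\<lambda>m. C / sqrt (real m)) \<longlonglongrightarrow> 0"
  by (rule tendsto_divide_0[OF tendsto_const filterlim_at_top_imp_at_infinity[OF sqrt_seq_top]])

lemma bounded_over_sqrt:
  assumes "\<forall>\<^sub>F m in sequentially. \<bar>c m\<bar> \<le> C"
  shows "(\<lambda>m. c m / sqrt (real m)) \<longlonglongrightarrow> 0"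
proof (rule Lim_null_comparison[OF _ const_over_sqrt[of C]])
  show "\<forall>\<^sub>F m in sequentially. norm (c m / sqrt (real m)) \<le> C / sqrt (real m)"
    using assms by eventually_elim (simp add: abs_div divide_right_mono)
qed

lemma Fb_lim:
  assumes p: "0 < p" "p < 1" and lim: "(\<lambda>m. c m / sqrt (real m)) \<longlonglongrightarrow> d"
  shows "(\<lambda>m. Fb m p (real m * p + c m)) \<longlonglongrightarrow> cdf std_normal_distribution (d / sqrt (p*(1-p)))"
  unfolding Fb_def by (rule bin_cdf_lim[OF p lim])

lemma part_eq:
  fixes k :: "nat \<Rightarrow> nat" and \<gamma> B :: real
  assumes u: "0 < \<gamma>" "\<gamma> < 1"
    and kb: "\<forall>\<^sub>F n in sequentially. \<bar>real (k n) - real n * \<gamma>\<bar> \<le> B"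
    and k1: "\<And>n. n \<ge> 1 \<Longrightarrow> 1 \<le> k n \<and> k n \<le> n"
  shows "(\<lambda>n. Sb n (k n) \<gamma>) \<longlonglongrightarrow> 1/2" and "filterlim (\<lambda>n. Db n (k n) \<gamma>) at_top sequentially"
proof -
  define \<sigma> where "\<sigma> = sqrt (\<gamma> * (1 - \<gamma>))"
  have sp: "\<sigma> > 0" using u by (simp add: \<sigma>_def)
  define c where "c n = real (k n) - 1 - real n * \<gamma>" for n
  have cb: "\<forall>\<^sub>F n in sequentially. \<bar>c n\<bar> \<le> B + 1"
    using kb by eventually_elim (auto simp: c_def)
  have "(\<lambda>n. Fb n \<gamma> (real n * \<gamma> + c n)) \<longlonglongrightarrow> cdf std_normal_distribution (0 / \<sigma>)"
    unfolding \<sigma>_def by (rule Fb_lim[OF u bounded_over_sqrt[OF cb]])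
  then have F0: "(\<lambda>n. Fb n \<gamma> (real n * \<gamma> + c n)) \<longlonglongrightarrow> 1/2" by (simp add: stdN_half)
  have eqS: "Sb n (k n) \<gamma> = 1 - Fb n \<gamma> (real n * \<gamma> + c n)" if n: "n \<ge> 1" for n
  proof -
    have "{j. j < k n} = {j. real j \<le> real n * \<gamma> + c n}"
      using k1[OF n] by (auto simp: c_def)
    then show ?thesis
      using Sb_prob[of \<gamma> n "k n"] prob_split[of "binomial_pmf n \<gamma>" "k n"] u by (simp add: Fb_def)
  qed
  show "(\<lambda>n. Sb n (k n) \<gamma>) \<longlonglongrightarrow> 1/2"
  proof (rule Lim_transform_eventually)
    show "(\<lambda>n. 1 - Fb n \<gamma> (real n * \<gamma> + c n)) \<longlonglongrightarrow> 1/2"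
      using tendsto_diff[OF tendsto_const F0, of 1] by simp
    show "\<forall>\<^sub>F n in sequentially. 1 - Fb n \<gamma> (real n * \<gamma> + c n) = Sb n (k n) \<gamma>"
      using eventually_ge_at_top[of 1] by eventually_elim (simp add: eqS)
  qed
  define j0 where "j0 m = k (Suc m) - 1" for m
  define c' where "c' m = real (j0 m) - real m * \<gamma>" for m
  have cb': "\<forall>\<^sub>F m in sequentially. \<bar>c' m\<bar> \<le> B + 1"
  proof -
    have "\<forall>\<^sub>F m in sequentially. \<bar>real (k (Suc m)) - real (Suc m) * \<gamma>\<bar> \<le> B"
      by (rule eventually_sequentially_Suc[THEN iffD2, OF kb])
    then show ?thesis
    proof eventually_elim
      case (elim m)
      have "real (j0 m) = real (k (Suc m)) - 1" using k1[of "Suc m"] by (simp add: j0_def)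
      then show ?case using elim u by (simp add: c'_def algebra_simps)
    qed
  qed
  have c'0: "(\<lambda>m. c' m / sqrt (real m)) \<longlonglongrightarrow> 0" by (rule bounded_over_sqrt[OF cb'])
  have lim_pm: "(\<lambda>m. (c' m + s * sqrt (real m)) / sqrt (real m)) \<longlonglongrightarrow> s" for s
  proof (rule Lim_transform_eventually)
    show "(\<lambda>m. c' m / sqrt (real m) + s) \<longlonglongrightarrow> s" using tendsto_add[OF c'0 tendsto_const, of s] by simp
    show "\<forall>\<^sub>F m in sequentially. c' m / sqrt (real m) + s = (c' m + s * sqrt (real m)) / sqrt (real m)"
      using eventually_ge_at_top[of 1] by eventually_elim (simp add: field_simps)
  qed
  have FA: "(\<lambda>m. Fb m \<gamma> (real (j0 m) + sqrt (real m))) \<longlonglongrightarrow> cdf std_normal_distribution (1 / \<sigma>)"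
    using Fb_lim[OF u lim_pm[of 1]] by (simp add: c'_def \<sigma>_def)
  have FB: "(\<lambda>m. Fb m \<gamma> (real (j0 m) - sqrt (real m))) \<longlonglongrightarrow> cdf std_normal_distribution (-1 / \<sigma>)"
    using Fb_lim[OF u lim_pm[of "-1"]] by (simp add: c'_def \<sigma>_def)
  have FC: "(\<lambda>m. Fb m \<gamma> (real (j0 m))) \<longlonglongrightarrow> 1/2"
    using Fb_lim[OF u c'0] by (simp add: c'_def stdN_half)
  define L where "L = min (cdf std_normal_distribution (1 / \<sigma>) - 1/2) (1/2 - cdf std_normal_distribution (-1 / \<sigma>))"
  have L: "L > 0"
    using stdN_pos[of 0 "1/\<sigma>"] stdN_pos[of "-1/\<sigma>" 0] sp by (simp add: L_def stdN_half)
  have MLim: "(\<lambda>m. min (Fb m \<gamma> (real (j0 m) + sqrt (real m)) - Fb m \<gamma> (real (j0 m)))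
                    (Fb m \<gamma> (real (j0 m)) - Fb m \<gamma> (real (j0 m) - sqrt (real m)))) \<longlonglongrightarrow> L"
    unfolding L_def by (intro tendsto_min tendsto_diff FA FB FC)
  have evL: "\<forall>\<^sub>F m in sequentially. L/2 < min (Fb m \<gamma> (real (j0 m) + sqrt (real m)) - Fb m \<gamma> (real (j0 m)))
                    (Fb m \<gamma> (real (j0 m)) - Fb m \<gamma> (real (j0 m) - sqrt (real m)))"
    using order_tendstoD(1)[OF MLim, of "L/2"] L by simp
  have top: "filterlim (\<lambda>m. L/4 * sqrt (real m)) at_top sequentially"
    by (rule filterlim_tendsto_pos_mult_at_top[OF tendsto_const _ sqrt_seq_top]) (use L in simp)
  have "filterlim (\<lambda>m. Db (Suc m) (k (Suc m)) \<gamma>) at_top sequentially"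
  proof (rule filterlim_at_top_mono[OF top])
    show "\<forall>\<^sub>F m in sequentially. L/4 * sqrt (real m) \<le> Db (Suc m) (k (Suc m)) \<gamma>"
      using evL
    proof eventually_elim
      case (elim m)
      let ?b = "pmf (binomial_pmf m \<gamma>) (j0 m)"
      have kk: "1 \<le> k (Suc m)" "k (Suc m) \<le> Suc m" using k1[of "Suc m"] by auto
      have Db: "Db (Suc m) (k (Suc m)) \<gamma> = real (Suc m) * ?b"
        using kk u by (simp add: Db_def j0_def)
      have wb: "min (Fb m \<gamma> (real (j0 m) + sqrt (real m)) - Fb m \<gamma> (real (j0 m)))
                    (Fb m \<gamma> (real (j0 m)) - Fb m \<gamma> (real (j0 m) - sqrt (real m))) \<le> (sqrt (real m) + 1) * ?b"
        using window_bound[of \<gamma> "sqrt (real m)" m "j0 m"] u by simp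
      have hL: "L/2 \<le> (sqrt (real m) + 1) * ?b"
        using elim wb by linarith
      have pos1: "sqrt (real m) + 1 > 0" using real_sqrt_ge_zero[of "real m"] by linarith
      have b: "L/2 / (sqrt (real m) + 1) \<le> ?b"
        by (subst pos_divide_le_eq[OF pos1]) (use hL in \<open>simp add: mult.commute\<close>)
      have s1: "sqrt (real m) \<le> real m + 1"
      proof -
        have "sqrt (real m) \<le> sqrt ((real m + 1)^2)" by (intro real_sqrt_le_mono) (simp add: power2_eq_square algebra_simps)
        then show ?thesis by simp
      qed
      have "L/4 * sqrt (real m) \<le> real (Suc m) * (L/2 / (sqrt (real m) + 1))"
      proof -
        have pos: "sqrt (real m) + 1 > 0" using real_sqrt_ge_zero[of "real m"] by linarith
        have ss: "sqrt (real m) * sqrt (real m) = real m" by simp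
        have "L/4 * sqrt (real m) * (sqrt (real m) + 1) = L/4 * (real m + sqrt (real m))"
          using ss by (simp add: algebra_simps)
        also have "\<dots> \<le> L/4 * (2 * real m + 1)" using s1 L by (intro mult_left_mono) auto
        also have "\<dots> \<le> real (Suc m) * (L/2)" using L by (simp add: algebra_simps)
        finally have "L/4 * sqrt (real m) * (sqrt (real m) + 1) \<le> real (Suc m) * (L/2)" .
        then have "L/4 * sqrt (real m) \<le> real (Suc m) * (L/2) / (sqrt (real m) + 1)"
          by (subst pos_le_divide_eq[OF pos]) simp
        then show ?thesis by simp
      qed
      also have "\<dots> \<le> real (Suc m) * ?b" by (intro mult_left_mono b) simp
      finally show ?case using Db by simp
    qed
  qed
  then show "filterlim (\<lambda>n. Db n (k n) \<gamma>) at_top sequentially"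
    by (rule filterlim_sequentially_Suc[THEN iffD1])
qed

lemma K_props:
  assumes n: "n \<ge> 1" and a: "0 \<le> \<alpha>" "\<alpha> \<le> 1"
  shows "(real n - 1) * \<alpha> < real (Kk n \<alpha>)" "real (Kk n \<alpha>) \<le> (real n - 1) * \<alpha> + 1"
    "1 \<le> Kk n \<alpha>" "Kk n \<alpha> \<le> n"
proof -
  define x where "x = (real n - 1) * \<alpha>"
  have x0: "0 \<le> x" using n a by (simp add: x_def)
  have x1: "x \<le> real n - 1" using n a by (simp add: x_def mult_left_le)
  have f0: "0 \<le> \<lfloor>x\<rfloor>" using x0 by simp
  have K: "real (Kk n \<alpha>) = 1 + real_of_int \<lfloor>x\<rfloor>"
    using f0 by (simp add: Kk_def x_def[symmetric])
  show "(real n - 1) * \<alpha> < real (Kk n \<alpha>)" using K unfolding x_def[symmetric] by linarith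
  show "real (Kk n \<alpha>) \<le> (real n - 1) * \<alpha> + 1" using K unfolding x_def[symmetric] by linarith
  show "1 \<le> Kk n \<alpha>" using K f0 by linarith
  have "real (Kk n \<alpha>) \<le> real n" using K x1 by linarith
  then show "Kk n \<alpha> \<le> n" by simp
qed

theorem proposition3p12:
  fixes \<gamma> :: real and g :: "nat \<Rightarrow> real"
  assumes "0 \<le> \<gamma>" "\<gamma> \<le> 1"
    and "\<And>n. 0 \<le> g n \<and> g n \<le> 1"
    and "(\<lambda>n. \<bar>g n - \<gamma>\<bar>) \<in> O(\<lambda>n. 1 / real n)"
  shows "\<forall>u \<in> {0<..<1}.
           ((\<lambda>n. phi n (g n) u) \<longlongrightarrow>
              (1/2 * indicator {\<gamma>} u + indicator {\<gamma><..1} u)) sequentially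
         \<and> (u \<noteq> \<gamma> \<longrightarrow> ((\<lambda>n. deriv (phi n (g n)) u) \<longlongrightarrow> 0) sequentially)
         \<and> (u = \<gamma> \<longrightarrow> filterlim (\<lambda>n. deriv (phi n (g n)) u) at_top sequentially)"
proof -
  obtain C where C: "C > 0" "\<forall>\<^sub>F n in sequentially. norm \<bar>g n - \<gamma>\<bar> \<le> C * norm (1 / real n)"
    using assms(4) by (elim landau_o.bigE) auto
  define k where "k n = Kk n (g n)" for n
  have k1: "1 \<le> k n \<and> k n \<le> n" if "n \<ge> 1" for n
    using K_props[OF that, of "g n"] assms(3)[of n] by (simp add: k_def)
  have kb: "\<forall>\<^sub>F n in sequentially. \<bar>real (k n) - real n * \<gamma>\<bar> \<le> C + 1"
    using C(2) eventually_ge_at_top[of 1]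
  proof eventually_elim
    case (elim n)
    have gn: "0 \<le> g n" "g n \<le> 1" using assms(3)[of n] by auto
    have "real n * \<bar>g n - \<gamma>\<bar> \<le> C" using elim by (simp add: field_simps)
    then have "\<bar>real n * g n - real n * \<gamma>\<bar> \<le> C" by (simp add: abs_mult right_diff_distrib[symmetric])
    moreover have "(real n - 1) * g n < real (k n)" "real (k n) \<le> (real n - 1) * g n + 1"
      using K_props[of n "g n"] elim gn by (auto simp: k_def)
    ultimately show ?case using gn by (simp add: algebra_simps abs_le_iff)
  qed
  show ?thesis
  proof
    fix u :: real assume u: "u \<in> {0<..<1}"
    have phiS: "(\<lambda>n. phi n (g n) u) = (\<lambda>n. Sb n (k n) u)" by (simp add: phi_Sb k_def)
    have phiD: "(\<lambda>n. deriv (phi n (g n)) u) = (\<lambda>n. Db n (k n) u)" by (simp add: deriv_phi k_def)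
    consider "\<gamma> < u" | "u < \<gamma>" | "u = \<gamma>" by linarith
    then show "((\<lambda>n. phi n (g n) u) \<longlongrightarrow> (1/2 * indicator {\<gamma>} u + indicator {\<gamma><..1} u)) sequentially
         \<and> (u \<noteq> \<gamma> \<longrightarrow> ((\<lambda>n. deriv (phi n (g n)) u) \<longlongrightarrow> 0) sequentially)
         \<and> (u = \<gamma> \<longrightarrow> filterlim (\<lambda>n. deriv (phi n (g n)) u) at_top sequentially)"
    proof cases
      case 1
      have "0 < u" "u < 1" using u by auto
      note P = part_gt[OF this 1 assms(1) kb k1]
      show ?thesis unfolding phiS phiD using P 1 u by auto
    next
      case 2
      have "0 < u" using u by auto
      note P = part_lt[OF this 2 assms(2) kb k1]
      show ?thesis unfolding phiS phiD using P 2 u by auto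
    next
      case 3
      have "0 < \<gamma>" "\<gamma> < 1" using u 3 by auto
      note P = part_eq[OF this kb k1]
      show ?thesis unfolding phiS phiD using P 3 by auto
    qed
  qed
qed

end
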